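(* Let $\xi=(\xi(x))_{x\in\mathbb{Z}}$ be i.i.d. random variables with values in $(-\infty,0]$. Fix $\eta\in(0,1)$ and let $\widetilde G_\eta\colon(0,\infty)\to(0,\infty)$ be a function such that (ii) $\ell\mapsto1/\widetilde G_\eta(\ell)$ is increasing and concave for all sufficiently large $\ell$, and (iii) the random variable $1/\widetilde G_\eta(\log(-\xi(0)\vee1))$ has finite first moment. Then there exists $\varrho\in(0,\infty)$ such that \[ \limsup_{n\to\infty}\frac{1}{\widetilde G_\eta^{-1}(\varrho/n)}\sum_{x=1}^n\log\bigl(-\xi(x)\vee1\bigr)\le1\qquad\text{Prob-almost surely.} \]
   Context: Prob denotes the law of $\xi$. $\widetilde G_\eta^{-1}$ denotes the inverse function of $\widetilde G_\eta$ restricted to a half-line $[x_0,\infty)$ on which $1/\widetilde G_\eta$ is increasing and concave. *)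

theory Defs
  imports "HOL-Probability.Probability"
begin

end

theory Submission
  imports Defs
begin


lemma sum_tail_bound:
  fixes x :: real
  shows "0 \<le> x \<Longrightarrow> (\<Sum>j<J. (if x > 2^j then 2^j else 0 :: real)) \<le> (if x > 1 then 2*x - 1 else 0)"
proof (induction J arbitrary: x)
  case 0
  then show ?case by simp
next
  case (Suc J)
  have e: "(\<Sum>j<J. (if x > 2^Suc j then 2^Suc j else 0 :: real)) = 2 * (\<Sum>j<J. (if x/2 > 2^j then 2^j else 0 :: real))"
    unfolding sum_distrib_left by (rule sum.cong) (auto simp: field_simps)
  have ih: "(\<Sum>j<J. (if x/2 > 2^j then 2^j else 0 :: real)) \<le> (if x/2 > 1 then 2*(x/2) - 1 else 0)"
    using Suc.IH[of "x/2"] Suc.prems by (simp only:)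
  show ?case
    unfolding sum.lessThan_Suc_shift e using ih Suc.prems by (auto split: if_splits)
qed

lemma sum_sq_bound:
  fixes x :: real
  shows "0 \<le> x \<Longrightarrow> (\<Sum>j<J. (if x \<le> 2^j then x^2 / 2^j else 0 :: real)) \<le> 2 * x * min 1 x"
proof (induction J arbitrary: x)
  case 0
  then show ?case by simp
next
  case (Suc J)
  have e: "(\<Sum>j<J. (if x \<le> 2^Suc j then x^2 / 2^Suc j else 0 :: real)) = 2 * (\<Sum>j<J. (if x/2 \<le> 2^j then (x/2)^2 / 2^j else 0 :: real))"
    unfolding sum_distrib_left by (rule sum.cong) (auto simp: field_simps power2_eq_square)
  have ih: "(\<Sum>j<J. (if x/2 \<le> 2^j then (x/2)^2 / 2^j else 0 :: real)) \<le> 2 * (x/2) * min 1 (x/2)"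
    using Suc.IH[of "x/2"] Suc.prems by (simp only:)
    have q: "x \<le> 2 \<Longrightarrow> x*x \<le> 2*x" using Suc.prems by (intro mult_right_mono) auto
    show ?case
    unfolding sum.lessThan_Suc_shift e using ih Suc.prems q
    by (auto split: if_splits simp: min_def power2_eq_square)
qed



lemma concave_incr:
  fixes f :: "real \<Rightarrow> real"
  assumes conc: "concave_on {x0..} f" and u: "x0 \<le> u" and uv: "u \<le> v" and d: "0 \<le> d"
  shows "f (v + d) - f v \<le> f (u + d) - f u"
proof (cases "d = 0 \<or> u = v")
  case True then show ?thesis by auto
next
  case False
  then have dp: "0 < d" and uv': "u < v" using d uv by auto
  define t where "t = d / (v - u + d)"
  have nz: "v - u + d \<noteq> 0" using dp uv' by simp
  have td: "t * (v - u + d) = d" using nz unfolding t_def by simp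
  have t0: "0 \<le> t" and t1: "t \<le> 1" using dp uv' by (auto simp: t_def field_simps)
  have e1: "(1 - t) * u + t * (v + d) = u + d"
  proof -
    have "(1 - t) * u + t * (v + d) = u + t * (v - u + d)" by (simp add: algebra_simps)
    then show ?thesis using td by simp
  qed
  have e2: "(1 - (1 - t)) * u + (1 - t) * (v + d) = v"
  proof -
    have "(1 - (1 - t)) * u + (1 - t) * (v + d) = v + d - t * (v - u + d)" by (simp add: algebra_simps)
    then show ?thesis using td by simp
  qed
  have "(1 - t) * f u + t * f (v + d) \<le> f ((1 - t) *\<^sub>R u + t *\<^sub>R (v + d))"
    by (rule concave_onD[OF conc t0 t1]) (use u uv d in auto)
  then have i1: "(1 - t) * f u + t * f (v + d) \<le> f (u + d)" using e1 by simp
  have "(1 - (1 - t)) * f u + (1 - t) * f (v + d) \<le> f ((1 - (1 - t)) *\<^sub>R u + (1 - t) *\<^sub>R (v + d))"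
    by (rule concave_onD[OF conc]) (use t0 t1 u uv d in auto)
  then have i2: "t * f u + (1 - t) * f (v + d) \<le> f v" using e2 by simp
  from i1 i2 show ?thesis by (simp add: algebra_simps)
qed

lemma concave_sum:
  fixes f :: "real \<Rightarrow> real" and y :: "nat \<Rightarrow> real"
  assumes conc: "concave_on {x0..} f" and y: "\<And>i. 0 \<le> y i"
  shows "f (x0 + (\<Sum>i\<in>{1..n}. y i)) \<le> f x0 + (\<Sum>i\<in>{1..n}. f (x0 + y i) - f x0)"
proof (induction n)
  case 0
  then show ?case by simp
next
  case (Suc n)
  have s: "0 \<le> (\<Sum>i\<in>{1..n}. y i)" using y by (simp add: sum_nonneg)
  have "f (x0 + (\<Sum>i\<in>{1..n}. y i) + y (Suc n)) - f (x0 + (\<Sum>i\<in>{1..n}. y i)) \<le> f (x0 + y (Suc n)) - f x0"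
    by (rule concave_incr[OF conc]) (use s y in auto)
  then show ?case using Suc by (simp add: add.assoc)
qed



definition trunc :: "real \<Rightarrow> real \<Rightarrow> real" where
  "trunc N t = (if 0 \<le> t \<and> t \<le> N then t else 0)"

lemma trunc_measurable[measurable]: "trunc N \<in> borel_measurable borel"
  unfolding trunc_def by measurable

lemma (in prob_space) exp_ident:
  assumes rvX: "\<And>x. X x \<in> borel_measurable M"
    and idX: "\<And>x. distr M borel (X x) = distr M borel (X 0)"
    and g: "g \<in> borel_measurable borel"
  shows "expectation (\<lambda>\<omega>. g (X x \<omega>)) = expectation (\<lambda>\<omega>. (g (X 0 \<omega>)::real))"
proof -
  have "expectation (\<lambda>\<omega>. g (X x \<omega>)) = integral\<^sup>L (distr M borel (X x)) g"
    by (rule integral_distr[symmetric]) (use rvX g in auto)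
  also have "\<dots> = integral\<^sup>L (distr M borel (X 0)) g" using idX[of x] by simp
  also have "\<dots> = expectation (\<lambda>\<omega>. g (X 0 \<omega>))"
    by (rule integral_distr) (use rvX g in auto)
  finally show ?thesis .
qed

lemma (in prob_space) prob_ident:
  assumes rvX: "\<And>x. X x \<in> borel_measurable M"
    and idX: "\<And>x. distr M borel (X x) = distr M borel (X 0)"
    and S: "S \<in> sets borel"
  shows "prob {\<omega>\<in>space M. X x \<omega> \<in> S} = prob {\<omega>\<in>space M. X 0 \<omega> \<in> S}"
proof -
  have "prob {\<omega>\<in>space M. X x \<omega> \<in> S} = measure (distr M borel (X x)) S"
    using rvX S by (subst measure_distr) (auto simp: vimage_def Int_def conj_commute)
  also have "\<dots> = measure (distr M borel (X 0)) S" using idX[of x] by simp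
  also have "\<dots> = prob {\<omega>\<in>space M. X 0 \<omega> \<in> S}"
    using rvX S by (subst measure_distr) (auto simp: vimage_def Int_def conj_commute)
  finally show ?thesis .
qed

lemma (in prob_space) block_var:
  fixes X :: "int \<Rightarrow> 'a \<Rightarrow> real" and K :: nat
  assumes rvX: "\<And>x. X x \<in> borel_measurable M"
    and indX: "indep_vars (\<lambda>_. borel) X UNIV"
    and idX: "\<And>x. distr M borel (X x) = distr M borel (X 0)"
    and N: "0 \<le> N"
  defines "T \<equiv> (\<lambda>\<omega>. \<Sum>x\<in>{1..K}. trunc N (X (int x) \<omega>))"
  shows "expectation T = real K * expectation (\<lambda>\<omega>. trunc N (X 0 \<omega>))"
    and "variance T \<le> real K * expectation (\<lambda>\<omega>. (trunc N (X 0 \<omega>))\<^sup>2)"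
proof -
  define \<mu> where "\<mu> = expectation (\<lambda>\<omega>. trunc N (X 0 \<omega>))"
  define W where "W i \<omega> = trunc N (X i \<omega>) - \<mu>" for i \<omega>
  have [measurable]: "\<And>x. X x \<in> borel_measurable M" by (rule rvX)
  have bnd: "\<bar>trunc N t\<bar> \<le> \<bar>N\<bar>" for t unfolding trunc_def by auto
  have intg: "integrable M (\<lambda>\<omega>. trunc N (X i \<omega>))" for i
    by (rule integrable_const_bound[where B="\<bar>N\<bar>"]) (use bnd in auto)
  have intg2: "integrable M (\<lambda>\<omega>. (trunc N (X i \<omega>))\<^sup>2)" for i
    by (rule integrable_const_bound[where B="N\<^sup>2"])
       (auto simp: abs_le_square_iff[symmetric] bnd)
  have Wint: "integrable M (W i)" for i unfolding W_def using intg by auto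
  have Wmeas[measurable]: "W i \<in> borel_measurable M" for i unfolding W_def by measurable
  have Eg: "expectation (\<lambda>\<omega>. trunc N (X i \<omega>)) = \<mu>" for i
    unfolding \<mu>_def by (rule exp_ident[where X=X, OF rvX idX]) simp
  have EW: "expectation (W i) = 0" for i
    unfolding W_def using Eg intg by (simp add: prob_space)
  have "expectation T = (\<Sum>x\<in>{1..K}. expectation (\<lambda>\<omega>. trunc N (X (int x) \<omega>)))"
    unfolding T_def by (rule Bochner_Integration.integral_sum) (rule intg)
  also have "\<dots> = (\<Sum>x\<in>{1..K}. \<mu>)" using Eg by (intro sum.cong) auto
  also have "\<dots> = real K * \<mu>" by simp
  finally show ET: "expectation T = real K * \<mu>" .
  have TW0: "T \<omega> - real K * \<mu> = (\<Sum>x\<in>{1..K}. W (int x) \<omega>)" for \<omega>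
    unfolding T_def W_def by (simp add: sum_subtractf)
  have TW: "T \<omega> - expectation T = (\<Sum>x\<in>{1..K}. W (int x) \<omega>)" for \<omega>
    using TW0 ET by simp
  have indW: "indep_vars (\<lambda>_. borel) W UNIV"
    unfolding W_def by (rule indep_vars_compose2[OF indX]) measurable
  have cross: "expectation (\<lambda>\<omega>. W a \<omega> * W b \<omega>) = (if a = b then expectation (\<lambda>\<omega>. (W a \<omega>)\<^sup>2) else 0)" for a b
  proof (cases "a = b")
    case True then show ?thesis by (simp add: power2_eq_square)
  next
    case False
    have ind2: "indep_vars (\<lambda>_. borel) W {a, b}" by (rule indep_vars_subset[OF indW]) auto
    have "expectation (\<lambda>\<omega>. \<Prod>i\<in>{a,b}. W i \<omega>) = (\<Prod>i\<in>{a,b}. expectation (W i))"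
      by (rule indep_vars_lebesgue_integral[OF _ ind2]) (auto simp: Wint)
    then show ?thesis using False EW by simp
  qed
  have Wbnd: "\<bar>W i \<omega>\<bar> \<le> \<bar>N\<bar> + \<bar>\<mu>\<bar>" for i \<omega>
    unfolding W_def using bnd[of "X i \<omega>"] by linarith
  have prodint: "integrable M (\<lambda>\<omega>. W a \<omega> * W b \<omega>)" for a b
  proof (rule integrable_const_bound[where B="(\<bar>N\<bar> + \<bar>\<mu>\<bar>) * (\<bar>N\<bar> + \<bar>\<mu>\<bar>)"])
    show "AE x in M. norm (W a x * W b x) \<le> (\<bar>N\<bar> + \<bar>\<mu>\<bar>) * (\<bar>N\<bar> + \<bar>\<mu>\<bar>)"
      using Wbnd by (auto simp: abs_mult intro!: mult_mono)
  qed measurable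
  have "variance T = expectation (\<lambda>\<omega>. \<Sum>a\<in>{1..K}. \<Sum>b\<in>{1..K}. W (int a) \<omega> * W (int b) \<omega>)"
    unfolding TW power2_eq_square sum_product by simp
  also have "\<dots> = (\<Sum>a\<in>{1..K}. \<Sum>b\<in>{1..K}. expectation (\<lambda>\<omega>. W (int a) \<omega> * W (int b) \<omega>))"
    using prodint by (simp add: Bochner_Integration.integral_sum Bochner_Integration.integrable_sum)
  also have "\<dots> = (\<Sum>a\<in>{1..K}. expectation (\<lambda>\<omega>. (W (int a) \<omega>)\<^sup>2))"
    unfolding cross by (simp add: if_distrib cong: if_cong)
  also have "\<dots> \<le> (\<Sum>a\<in>{1..K}. expectation (\<lambda>\<omega>. (trunc N (X 0 \<omega>))\<^sup>2))"
  proof (rule sum_mono)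
    fix a :: nat
    have "expectation (\<lambda>\<omega>. (W (int a) \<omega>)\<^sup>2) = expectation (\<lambda>\<omega>. (trunc N (X (int a) \<omega>))\<^sup>2) - \<mu>\<^sup>2"
    proof -
      have "(\<lambda>\<omega>. (W (int a) \<omega>)\<^sup>2) = (\<lambda>\<omega>. (trunc N (X (int a) \<omega>))\<^sup>2 - 2 * \<mu> * trunc N (X (int a) \<omega>) + \<mu>\<^sup>2)"
        unfolding W_def by (simp add: power2_diff algebra_simps)
      then show ?thesis using intg intg2 Eg
        by (simp add: prob_space power2_eq_square)
    qed
    also have "\<dots> \<le> expectation (\<lambda>\<omega>. (trunc N (X (int a) \<omega>))\<^sup>2)" by simp
    also have "\<dots> = expectation (\<lambda>\<omega>. (trunc N (X 0 \<omega>))\<^sup>2)"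
      by (rule exp_ident[where X=X, OF rvX idX]) measurable
    finally show "expectation (\<lambda>\<omega>. (W (int a) \<omega>)\<^sup>2) \<le> expectation (\<lambda>\<omega>. (trunc N (X 0 \<omega>))\<^sup>2)" .
  qed
  also have "\<dots> = real K * expectation (\<lambda>\<omega>. (trunc N (X 0 \<omega>))\<^sup>2)" by simp
  finally show "variance T \<le> real K * expectation (\<lambda>\<omega>. (trunc N (X 0 \<omega>))\<^sup>2)" .
qed



lemma exists_pow2: "1 \<le> (n::nat) \<Longrightarrow> \<exists>j. n \<le> 2^j \<and> 2^j < 2*n"
proof -
  assume n: "1 \<le> n"
  have ex: "\<exists>j. n \<le> 2^j" by (rule exI[of _ n], rule less_imp_le, rule less_exp)
  define j where "j = (LEAST j. n \<le> (2::nat)^j)"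
  have j1: "n \<le> 2^j" unfolding j_def by (rule LeastI_ex[OF ex])
  show ?thesis
  proof (cases j)
    case 0 then show ?thesis using j1 n by (intro exI[of _ 0]) auto
  next
    case (Suc k)
    have "\<not> n \<le> 2^k" using not_less_Least[of k "\<lambda>j. n \<le> (2::nat)^j"] Suc j_def by auto
    then show ?thesis using j1 Suc by (intro exI[of _ j]) auto
  qed
qed

lemma (in prob_space) slln_upper:
  fixes X :: "int \<Rightarrow> 'a \<Rightarrow> real"
  assumes rvX: "\<And>x. X x \<in> borel_measurable M"
    and indX: "indep_vars (\<lambda>_. borel) X UNIV"
    and idX: "\<And>x. distr M borel (X x) = distr M borel (X 0)"
    and nnX: "\<And>x \<omega>. \<omega> \<in> space M \<Longrightarrow> 0 \<le> X x \<omega>"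
    and intX: "integrable M (X 0)"
  shows "\<exists>C. AE \<omega> in M. \<exists>N. \<forall>n\<ge>N. (\<Sum>x=1..n. X (int x) \<omega>) \<le> C * real n"
proof -
  have [measurable]: "\<And>x. X x \<in> borel_measurable M" by (rule rvX)
  define m where "m = expectation (X 0)"
  define K where "K j = (2::nat)^j" for j
  have Kpos: "0 < real (K j)" for j unfolding K_def by simp
  define T where "T j \<omega> = (\<Sum>x\<in>{1..K j}. trunc (real (K j)) (X (int x) \<omega>))" for j \<omega>
  define A where "A j = {\<omega>\<in>space M. \<exists>x\<in>{1..K j}. real (K j) < X (int x) \<omega>}" for j
  define B where "B j = {\<omega>\<in>space M. real (K j) \<le> \<bar>T j \<omega> - expectation (T j)\<bar>}" for j
  define D where "D j = A j \<union> B j" for j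
  define \<phi> where "\<phi> j t = (if t > real (K j) then real (K j) else 0) + (trunc (real (K j)) t)\<^sup>2 / real (K j)" for j t
  have Tm[measurable]: "T j \<in> borel_measurable M" for j unfolding T_def by measurable
  have Am[measurable]: "A j \<in> sets M" for j unfolding A_def by measurable
  have Bm[measurable]: "B j \<in> sets M" for j unfolding B_def by measurable
  have Dm[measurable]: "D j \<in> sets M" for j unfolding D_def by measurable
  have tb: "\<bar>trunc N t\<bar> \<le> \<bar>N\<bar>" for N t unfolding trunc_def by auto
  have PA: "prob (A j) \<le> expectation (\<lambda>\<omega>. if X 0 \<omega> > real (K j) then real (K j) else 0)" for j
  proof -
    have "A j = (\<Union>x\<in>{1..K j}. {\<omega>\<in>space M. X (int x) \<omega> \<in> {real (K j)<..}})"
      unfolding A_def by auto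
    then have "prob (A j) \<le> (\<Sum>x\<in>{1..K j}. prob {\<omega>\<in>space M. X (int x) \<omega> \<in> {real (K j)<..}})"
      by (simp add: measure_UNION_le)
    also have "\<dots> = (\<Sum>x\<in>{1..K j}. prob {\<omega>\<in>space M. X 0 \<omega> \<in> {real (K j)<..}})"
      by (intro sum.cong refl prob_ident[where X=X, OF rvX idX]) simp
    also have "\<dots> = real (K j) * prob {\<omega>\<in>space M. X 0 \<omega> \<in> {real (K j)<..}}" by simp
    also have "\<dots> = expectation (\<lambda>\<omega>. real (K j) * indicator {\<omega>\<in>space M. X 0 \<omega> \<in> {real (K j)<..}} \<omega>)"
      by (simp add: Int_absorb2)
    also have "\<dots> = expectation (\<lambda>\<omega>. if X 0 \<omega> > real (K j) then real (K j) else 0)"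
      by (rule Bochner_Integration.integral_cong) (auto simp: indicator_def)
    finally show ?thesis .
  qed
  have PB: "prob (B j) \<le> expectation (\<lambda>\<omega>. (trunc (real (K j)) (X 0 \<omega>))\<^sup>2) / real (K j)" for j
  proof -
    have int2: "integrable M (\<lambda>\<omega>. (T j \<omega>)\<^sup>2)"
    proof (rule integrable_const_bound[where B="(real (K j) * real (K j))\<^sup>2"])
      have "\<bar>T j \<omega>\<bar> \<le> real (K j) * real (K j)" for \<omega>
      proof -
        have "\<bar>T j \<omega>\<bar> \<le> (\<Sum>x\<in>{1..K j}. \<bar>trunc (real (K j)) (X (int x) \<omega>)\<bar>)"
          unfolding T_def by (rule sum_abs)
        also have "\<dots> \<le> (\<Sum>x\<in>{1..K j}. real (K j))"
          by (intro sum_mono) (use tb[of "real (K j)"] in simp)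
        finally show ?thesis by simp
      qed
      then show "AE x in M. norm ((T j x)\<^sup>2) \<le> (real (K j) * real (K j))\<^sup>2"
        by (auto simp: abs_le_square_iff[symmetric])
    qed measurable
    have "prob (B j) \<le> variance (T j) / (real (K j))\<^sup>2"
      unfolding B_def by (rule Chebyshev_inequality) (use int2 Kpos in auto)
    also have "\<dots> \<le> real (K j) * expectation (\<lambda>\<omega>. (trunc (real (K j)) (X 0 \<omega>))\<^sup>2) / (real (K j))\<^sup>2"
    proof (rule divide_right_mono)
      show "variance (T j) \<le> real (K j) * expectation (\<lambda>\<omega>. (trunc (real (K j)) (X 0 \<omega>))\<^sup>2)"
        unfolding T_def by (rule block_var(2)[where X=X, OF rvX indX idX]) simp
    qed simp
    also have "\<dots> = expectation (\<lambda>\<omega>. (trunc (real (K j)) (X 0 \<omega>))\<^sup>2) / real (K j)"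
      using Kpos[of j] by (simp add: power2_eq_square)
    finally show ?thesis .
  qed
  have bndf: "integrable M (\<lambda>\<omega>. f (X 0 \<omega>))" if "f \<in> borel_measurable borel" "\<And>t. \<bar>f t\<bar> \<le> c" for f :: "real \<Rightarrow> real" and c :: real
    by (rule integrable_const_bound[where B=c]) (use that in auto)
  have int1: "integrable M (\<lambda>\<omega>. if X 0 \<omega> > real (K j) then real (K j) else 0)" for j
    by (rule bndf[of _ "real (K j)"]) auto
  have int2: "integrable M (\<lambda>\<omega>. (trunc (real (K j)) (X 0 \<omega>))\<^sup>2)" for j
    by (rule bndf[of _ "(real (K j))\<^sup>2"]) (auto simp: abs_le_square_iff[symmetric] intro: order_trans[OF tb])
  have intphi: "integrable M (\<lambda>\<omega>. \<phi> j (X 0 \<omega>))" for j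
    unfolding \<phi>_def using int1 int2 by auto
  have PD: "prob (D j) \<le> expectation (\<lambda>\<omega>. \<phi> j (X 0 \<omega>))" for j
  proof -
    have "prob (D j) \<le> prob (A j) + prob (B j)"
      unfolding D_def by (rule measure_Un_le) auto
    also have "\<dots> \<le> expectation (\<lambda>\<omega>. if X 0 \<omega> > real (K j) then real (K j) else 0)
        + expectation (\<lambda>\<omega>. (trunc (real (K j)) (X 0 \<omega>))\<^sup>2) / real (K j)"
      using PA PB by (rule add_mono)
    also have "\<dots> = expectation (\<lambda>\<omega>. \<phi> j (X 0 \<omega>))"
      unfolding \<phi>_def using int1 int2 by simp
    finally show ?thesis .
  qed
  have phib: "(\<Sum>j<J. \<phi> j t) \<le> 4 * t" if t: "0 \<le> t" for J t
  proof -
    have e1: "(\<Sum>j<J. \<phi> j t) = (\<Sum>j<J. (if t > 2^j then 2^j else 0 :: real))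
        + (\<Sum>j<J. (if t \<le> 2^j then t^2 / 2^j else 0 :: real))"
      unfolding sum.distrib[symmetric]
      by (rule sum.cong) (use t in \<open>auto simp: \<phi>_def K_def trunc_def\<close>)
    have "(\<Sum>j<J. (if t > 2^j then 2^j else 0 :: real)) \<le> (if t > 1 then 2*t - 1 else 0)"
      by (rule sum_tail_bound[OF t])
    moreover have "(\<Sum>j<J. (if t \<le> 2^j then t^2 / 2^j else 0 :: real)) \<le> 2 * t * min 1 t"
      by (rule sum_sq_bound[OF t])
    moreover have "2 * t * min 1 t \<le> 2 * t" using t by (simp add: mult_left_le min_def)
    ultimately show ?thesis unfolding e1 using t by (auto split: if_splits)
  qed
  have m0: "0 \<le> m" unfolding m_def by (rule integral_nonneg_AE) (use nnX in auto)
  have partial: "(\<Sum>j<J. prob (D j)) \<le> 4 * m" for J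
  proof -
    have "(\<Sum>j<J. prob (D j)) \<le> (\<Sum>j<J. expectation (\<lambda>\<omega>. \<phi> j (X 0 \<omega>)))"
      by (intro sum_mono PD)
    also have "\<dots> = expectation (\<lambda>\<omega>. \<Sum>j<J. \<phi> j (X 0 \<omega>))"
      by (rule Bochner_Integration.integral_sum[symmetric]) (rule intphi)
    also have "\<dots> \<le> expectation (\<lambda>\<omega>. 4 * X 0 \<omega>)"
      by (rule integral_mono) (use intphi intX phib nnX in auto)
    also have "\<dots> = 4 * m" unfolding m_def by simp
    finally show ?thesis .
  qed
  have summ: "summable (\<lambda>j. prob (D j))"
    by (rule summableI_nonneg_bounded[where x="4*m"]) (use partial in auto)
  have BC: "AE \<omega> in M. eventually (\<lambda>j. \<omega> \<in> space M - D j) sequentially"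
    by (rule borel_cantelli_AE1) (use summ in \<open>auto simp: emeasure_eq_measure\<close>)
  have Tle: "expectation (T j) \<le> real (K j) * m" for j
  proof -
    have "expectation (T j) = real (K j) * expectation (\<lambda>\<omega>. trunc (real (K j)) (X 0 \<omega>))"
      unfolding T_def by (rule block_var(1)[where X=X, OF rvX indX idX]) simp
    also have "\<dots> \<le> real (K j) * m"
    proof (rule mult_left_mono)
      show "expectation (\<lambda>\<omega>. trunc (real (K j)) (X 0 \<omega>)) \<le> m"
        unfolding m_def
        by (rule integral_mono) (use intX nnX tb in \<open>auto simp: trunc_def intro!: bndf[of _ "real (K j)"]\<close>)
    qed simp
    finally show ?thesis .
  qed
  show ?thesis
  proof (rule exI[of _ "2 * (m + 1)"], use BC in \<open>eventually_elim\<close>)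
    fix \<omega> assume ev: "eventually (\<lambda>j. \<omega> \<in> space M - D j) sequentially"
    then obtain J where J: "\<And>j. j \<ge> J \<Longrightarrow> \<omega> \<in> space M - D j"
      unfolding eventually_sequentially by blast
    show "\<exists>N. \<forall>n\<ge>N. (\<Sum>x=1..n. X (int x) \<omega>) \<le> 2 * (m + 1) * real n"
    proof (intro exI[of _ "K J"] allI impI)
      fix n assume nJ: "K J \<le> n"
      then have n1: "1 \<le> n" unfolding K_def by (metis le_trans one_le_numeral one_le_power)
      obtain j where j: "n \<le> 2^j" "2^j < 2*n" using exists_pow2[OF n1] by blast
      have "(2::nat)^J \<le> 2^j" using nJ j unfolding K_def by linarith
      then have jJ: "J \<le> j" by (rule power_le_imp_le_exp[rotated]) simp
      have om: "\<omega> \<in> space M" and nA: "\<omega> \<notin> A j" and nB: "\<omega> \<notin> B j"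
        using J[OF jJ] unfolding D_def by auto
      have Xle: "X (int x) \<omega> \<le> real (K j)" if "x \<in> {1..K j}" for x
        using nA om that unfolding A_def by (auto simp: not_less)
      have Teq: "T j \<omega> = (\<Sum>x\<in>{1..K j}. X (int x) \<omega>)"
        unfolding T_def by (rule sum.cong) (use Xle nnX om in \<open>auto simp: trunc_def\<close>)
      have "(\<Sum>x=1..n. X (int x) \<omega>) \<le> (\<Sum>x\<in>{1..K j}. X (int x) \<omega>)"
        by (rule sum_mono2) (use j nnX om in \<open>auto simp: K_def\<close>)
      also have "\<dots> = T j \<omega>" using Teq by simp
      also have "\<dots> < expectation (T j) + real (K j)" using nB om unfolding B_def by auto
      also have "\<dots> \<le> real (K j) * (m + 1)" using Tle[of j] by (simp add: algebra_simps)
      also have "\<dots> \<le> real (2 * n) * (m + 1)"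
      proof (rule mult_right_mono)
        have "K j \<le> 2 * n" using j unfolding K_def by simp
        then show "real (K j) \<le> real (2 * n)" by (simp only: of_nat_le_iff)
      qed (use m0 in simp)
      finally show "(\<Sum>x=1..n. X (int x) \<omega>) \<le> 2 * (m + 1) * real n" by (simp add: algebra_simps)
    qed
  qed
qed



theorem lemma3p4:
  fixes M :: "'a measure" and \<xi> :: "int \<Rightarrow> 'a \<Rightarrow> real"
    and G :: "real \<Rightarrow> real" and \<eta> x0 :: real
  assumes "prob_space M"
    and rv: "\<And>x. \<xi> x \<in> borel_measurable M"
    and indep: "prob_space.indep_vars M (\<lambda>_. borel) \<xi> UNIV"
    and ident: "\<And>x. distr M borel (\<xi> x) = distr M borel (\<xi> 0)"
    and nonpos: "\<And>x \<omega>. \<omega> \<in> space M \<Longrightarrow> \<xi> x \<omega> \<le> 0"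
    and eta: "0 < \<eta>" "\<eta> < 1"
    and Gpos: "\<And>l. 0 < l \<Longrightarrow> 0 < G l"
    and x0: "0 < x0"
    and incr: "strict_mono_on {x0..} (\<lambda>l. 1 / G l)"
    and conc: "concave_on {x0..} (\<lambda>l. 1 / G l)"
    and Glim: "(G \<longlongrightarrow> 0) at_top"
    and mom: "integrable M (\<lambda>\<omega>. 1 / G (ln (max (- \<xi> 0 \<omega>) 1)))"
  shows "\<exists>\<rho>>0. AE \<omega> in M.
           limsup (\<lambda>n. ereal ((\<Sum>x=1..n. ln (max (- \<xi> (int x) \<omega>) 1))
                              / the_inv_into {x0..} G (\<rho> / real n))) \<le> 1"
proof -
  interpret prob_space M by (rule assms(1))
  have [measurable]: "\<And>x. \<xi> x \<in> borel_measurable M" by (rule rv)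
  define f where "f l = 1 / G l" for l
  have fpos: "0 < f l" if "0 < l" for l unfolding f_def using Gpos[OF that] by simp
  have fmono: "f a \<le> f b" if "x0 \<le> a" "a \<le> b" for a b
    using strict_mono_on_leD[OF incr, of a b] that unfolding f_def by auto
  have fsmono: "f a < f b" if "x0 \<le> a" "a < b" for a b
    using strict_mono_onD[OF incr, of a b] that unfolding f_def by auto
  have fconc: "concave_on {x0..} f" using conc unfolding f_def[abs_def] .
  define F where "F y = f (max y x0)" for y
  have Fmono: "mono F" unfolding F_def by (rule monoI) (intro fmono, auto)
  have [measurable]: "F \<in> borel_measurable borel" by (rule borel_measurable_mono[OF Fmono])
  define Y where "Y x \<omega> = ln (max (- \<xi> x \<omega>) 1)" for x \<omega>
  have Y0: "0 \<le> Y x \<omega>" for x \<omega> unfolding Y_def by simp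
  define h where "h t = F (x0 + ln (max (- t) 1))" for t
  have hm[measurable]: "h \<in> borel_measurable borel" unfolding h_def by measurable
  define Z where "Z x \<omega> = h (\<xi> x \<omega>)" for x \<omega>
  have Zeq: "Z x \<omega> = f (x0 + Y x \<omega>)" for x \<omega>
    unfolding Z_def h_def F_def Y_def by (simp add: max_def)
  have Zrv: "Z x \<in> borel_measurable M" for x unfolding Z_def by measurable
  have Zind: "indep_vars (\<lambda>_. borel) Z UNIV"
    unfolding Z_def by (rule indep_vars_compose2[OF indep]) simp
  have Zid: "distr M borel (Z x) = distr M borel (Z 0)" for x
  proof -
    have "distr M borel (Z x) = distr (distr M borel (\<xi> x)) borel h"
      unfolding Z_def by (subst distr_distr) (auto simp: comp_def)
    also have "\<dots> = distr (distr M borel (\<xi> 0)) borel h" using ident[of x] by simp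
    also have "\<dots> = distr M borel (Z 0)"
      unfolding Z_def by (subst distr_distr) (auto simp: comp_def)
    finally show ?thesis .
  qed
  have Znn: "0 \<le> Z x \<omega>" for x \<omega>
    unfolding Zeq using fpos[of "x0 + Y x \<omega>"] x0 Y0[of x \<omega>] by simp
  have fle2: "f (x0 + y) \<le> 2 * f y" if y: "2 * x0 \<le> y" for y
  proof -
    have "(1 - 1/2) * f x0 + (1/2) * f (2*y - x0) \<le> f ((1 - 1/2) *\<^sub>R x0 + (1/2) *\<^sub>R (2*y - x0))"
      by (rule concave_onD[OF fconc]) (use y x0 in auto)
    then have "f x0 / 2 + f (2*y - x0) / 2 \<le> f y" by (simp add: algebra_simps)
    moreover have "f (x0 + y) \<le> f (2*y - x0)" by (rule fmono) (use y x0 in auto)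
    moreover have "0 < f x0" using fpos x0 by simp
    ultimately show ?thesis by simp
  qed
  have Zbnd: "\<bar>Z 0 \<omega>\<bar> \<le> f (3 * x0) + 2 * \<bar>1 / G (ln (max (- \<xi> 0 \<omega>) 1))\<bar>" for \<omega>
  proof (cases "Y 0 \<omega> \<le> 2 * x0")
    case True
    have "Z 0 \<omega> \<le> f (3 * x0)" unfolding Zeq by (rule fmono) (use True Y0[of 0 \<omega>] in auto)
    moreover have "0 \<le> 2 * \<bar>1 / G (ln (max (- \<xi> 0 \<omega>) 1))\<bar>" by simp
    ultimately show ?thesis using Znn[of 0 \<omega>] by linarith
  next
    case False
    have "Z 0 \<omega> \<le> 2 * f (Y 0 \<omega>)" unfolding Zeq by (rule fle2) (use False in simp)
    moreover have "0 \<le> f (3 * x0)" using fpos x0 by (simp add: less_imp_le)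
    moreover have "f (Y 0 \<omega>) \<le> \<bar>1 / G (ln (max (- \<xi> 0 \<omega>) 1))\<bar>"
      unfolding f_def Y_def by (rule abs_ge_self)
    ultimately show ?thesis using Znn[of 0 \<omega>] by linarith
  qed
  have Zint: "integrable M (Z 0)"
  proof (rule Bochner_Integration.integrable_bound)
    show "integrable M (\<lambda>\<omega>. f (3 * x0) + 2 * \<bar>1 / G (ln (max (- \<xi> 0 \<omega>) 1))\<bar>)"
      by (intro Bochner_Integration.integrable_add integrable_mult_right integrable_abs mom) simp
    show "AE \<omega> in M. norm (Z 0 \<omega>) \<le> norm (f (3 * x0) + 2 * \<bar>1 / G (ln (max (- \<xi> 0 \<omega>) 1))\<bar>)"
      using Zbnd by (auto intro: order_trans[OF _ abs_ge_self])
  qed (rule Zrv)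
  obtain C where C: "AE \<omega> in M. \<exists>N. \<forall>n\<ge>N. (\<Sum>x=1..n. Z (int x) \<omega>) \<le> C * real n"
    using slln_upper[of Z, OF Zrv Zind Zid _ Zint] Znn by blast
  define C' where "C' = max C 1"
  have C'pos: "0 < C'" unfolding C'_def by simp
  define \<rho> where "\<rho> = 1 / C'"
  have \<rho>pos: "0 < \<rho>" unfolding \<rho>_def using C'pos by simp
  have fcont: "continuous_on {x0<..} f"
  proof -
    have "convex_on {x0<..} (\<lambda>l. - f l)"
      using fconc unfolding concave_on_def by (rule convex_on_subset) auto
    then have "continuous_on {x0<..} (\<lambda>l. - (- f l))"
      by (intro continuous_on_minus convex_on_continuous) auto
    then show ?thesis by simp
  qed
  have Lex: "\<rho> / real n \<in> G ` {x0..}" if n: "\<rho> * f (x0+1) \<le> real n" "1 \<le> n" for n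
  proof -
    have pos: "0 < \<rho> / real n" using \<rho>pos n by simp
    have "eventually (\<lambda>l. G l < \<rho> / real n) at_top" by (rule order_tendstoD(2)[OF Glim pos])
    then obtain b where b: "\<And>l. l \<ge> b \<Longrightarrow> G l < \<rho> / real n" by (auto simp: eventually_at_top_linorder)
    define b' where "b' = max b (x0 + 1)"
    have Gb: "G b' < \<rho> / real n" using b unfolding b'_def by simp
    have Gb0: "0 < G b'" using Gpos x0 unfolding b'_def by simp
    have fb: "real n / \<rho> \<le> f b'"
    proof -
      have "1 / (\<rho> / real n) \<le> 1 / G b'" unfolding inverse_eq_divide[symmetric] using Gb Gb0 by (intro le_imp_inverse_le) auto
      then show ?thesis unfolding f_def by simp
    qed
    have fa: "f (x0 + 1) \<le> real n / \<rho>" using n \<rho>pos by (simp add: field_simps)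
    have "continuous_on {x0+1..b'} f" by (rule continuous_on_subset[OF fcont]) auto
    then obtain L where L: "x0 + 1 \<le> L" "L \<le> b'" "f L = real n / \<rho>"
      using IVT'[of f "x0+1" "real n / \<rho>" b'] fa fb unfolding b'_def by auto
    have GL: "0 < G L" using Gpos x0 L by simp
    have "G L = \<rho> / real n" using L(3) GL \<rho>pos n unfolding f_def by (auto simp: field_simps)
    then show ?thesis using L x0 by (intro image_eqI[of _ _ L]) auto
  qed
  have injG: "inj_on G {x0..}"
  proof (rule inj_onI)
    fix a b assume ab: "a \<in> {x0..}" "b \<in> {x0..}" "G a = G b"
    then show "a = b" using strict_mono_on_eqD[OF incr, of a b] by auto
  qed
  define N1 where "N1 = nat \<lceil>\<rho> * f (x0+1)\<rceil> + 1"
  show ?thesis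
  proof (intro exI[of _ \<rho>] conjI \<rho>pos, use C in \<open>eventually_elim\<close>)
    fix \<omega> assume "\<exists>N. \<forall>n\<ge>N. (\<Sum>x=1..n. Z (int x) \<omega>) \<le> C * real n"
    then obtain N where N: "\<And>n. n \<ge> N \<Longrightarrow> (\<Sum>x=1..n. Z (int x) \<omega>) \<le> C * real n" by blast
    have "eventually (\<lambda>n. ereal ((\<Sum>x=1..n. ln (max (- \<xi> (int x) \<omega>) 1))
                              / the_inv_into {x0..} G (\<rho> / real n)) \<le> 1) sequentially"
      unfolding eventually_sequentially
    proof (intro exI[of _ "max N N1"] allI impI)
      fix n assume nN: "max N N1 \<le> n"
      have n1: "1 \<le> n" using nN unfolding N1_def by simp
      have nr: "\<rho> * f (x0+1) \<le> real n"
      proof -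
        have "\<rho> * f (x0+1) \<le> real (nat \<lceil>\<rho> * f (x0+1)\<rceil>)" by (rule real_nat_ceiling_ge)
        also have "\<dots> \<le> real n"
        proof -
          have "N1 \<le> n" using nN by simp
          then have "nat \<lceil>\<rho> * f (x0+1)\<rceil> \<le> n" unfolding N1_def by linarith
          then show ?thesis by (simp only: of_nat_le_iff)
        qed
        finally show ?thesis .
      qed
      define L where "L = the_inv_into {x0..} G (\<rho> / real n)"
      have Lmem: "\<rho> / real n \<in> G ` {x0..}" by (rule Lex[OF nr n1])
      have Lx0: "x0 \<le> L" unfolding L_def using the_inv_into_into[OF injG Lmem] by auto
      have GL: "G L = \<rho> / real n" unfolding L_def by (rule f_the_inv_into_f[OF injG Lmem])
      have fL: "f L = C' * real n" unfolding f_def GL \<rho>_def using n1 by simp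
      define S where "S = (\<Sum>x=1..n. Y (int x) \<omega>)"
      have S0: "0 \<le> S" unfolding S_def using Y0 by (simp add: sum_nonneg)
      have "f (x0 + S) \<le> f x0 + (\<Sum>i\<in>{1..n}. f (x0 + Y (int i) \<omega>) - f x0)"
        unfolding S_def by (rule concave_sum[OF fconc]) (rule Y0)
      also have "\<dots> = (\<Sum>i\<in>{1..n}. Z (int i) \<omega>) - (real n - 1) * f x0"
        unfolding Zeq by (simp add: sum_subtractf algebra_simps)
      also have "\<dots> \<le> (\<Sum>i\<in>{1..n}. Z (int i) \<omega>)"
        using n1 fpos[OF x0] by simp
      also have "\<dots> \<le> C * real n" using N nN by simp
      also have "\<dots> \<le> C' * real n" unfolding C'_def by (intro mult_right_mono) auto
      finally have "f (x0 + S) \<le> f L" unfolding fL .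
      then have "x0 + S \<le> L" using fsmono[of L "x0 + S"] Lx0 by fastforce
      then have "S / L \<le> 1" using x0 S0 by simp
      then show "ereal ((\<Sum>x=1..n. ln (max (- \<xi> (int x) \<omega>) 1))
                              / the_inv_into {x0..} G (\<rho> / real n)) \<le> 1"
        unfolding S_def Y_def L_def by simp
    qed
    then show "limsup (\<lambda>n. ereal ((\<Sum>x=1..n. ln (max (- \<xi> (int x) \<omega>) 1))
                              / the_inv_into {x0..} G (\<rho> / real n))) \<le> 1"
      by (rule Limsup_bounded)
  qed
qed
end
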